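(* Let $A\in\mathbb{R}^{m\times n}$ have rank $r\ge 1$, and let $S$ be an ordered subset of $r$ elements of $\{1,\dots,m\}$ such that the rows of $A$ indexed by $S$ are linearly independent. Let $\epsilon\ge 0$ and let $T$ be an ordered subset of $r$ elements of $\{1,\dots,n\}$ such that $A[S,T]$ is a $(1+\epsilon)$-local maximizer for the absolute determinant on the set of $r\times r$ nonsingular submatrices of $A[S,:]$. Let $\hat A:=A[:,T]$ and let $H\in\mathbb{R}^{n\times m}$ be the matrix whose rows indexed by $T$ are given by $\hat A^+=(\hat A^\top\hat A)^{-1}\hat A^\top$ and whose other rows are zero. Then $H$ is an ah-symmetric reflexive generalized inverse of $A$ satisfying $\|H\|_1\le r(1+\epsilon)\|H^r_{opt}\|_1$, where $H^r_{opt}$ is an ah-symmetric reflexive generalized inverse of $A$ of minimum 1-norm.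
   Context: $A[S,T]$ is the submatrix with row indices $S$ and column indices $T$; $A[S,:]$ (resp. $A[:,T]$) is the submatrix formed by rows $S$ (resp. columns $T$). $\|H\|_1=\sum_{i,j}|H_{ij}|$. $H$ is a generalized inverse of $A$ if $AHA=A$, reflexive if additionally $HAH=H$, and ah-symmetric if $AH$ is symmetric. For fixed $\epsilon\ge0$, $A[S,T]$ is a $(1+\epsilon)$-local maximizer for the absolute determinant on the set of $r\times r$ nonsingular submatrices of $A[S,:]$ if $A[S,T]$ is nonsingular and $|\det(A[S,T])|$ cannot be increased by a factor of more than $1+\epsilon$ by swapping an element of $T$ with one element from its complement in $\{1,\dots,n\}$. *)

theory Defs
  imports "Jordan_Normal_Form.DL_Rank" "Jordan_Normal_Form.Gauss_Jordan_Elimination"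
begin

definition submat :: "'a mat \<Rightarrow> nat list \<Rightarrow> nat list \<Rightarrow> 'a mat" where
  "submat A S T = mat (length S) (length T) (\<lambda>(i,j). A $$ (S ! i, T ! j))"

definition rows_sub :: "'a mat \<Rightarrow> nat list \<Rightarrow> 'a mat" where
  "rows_sub A S = submat A S [0..<dim_col A]"

definition cols_sub :: "'a mat \<Rightarrow> nat list \<Rightarrow> 'a mat" where
  "cols_sub A T = submat A [0..<dim_row A] T"

definition rows_lin_indep :: "real mat \<Rightarrow> nat list \<Rightarrow> bool" where
  "rows_lin_indep A S \<longleftrightarrow> distinct S \<and> (\<forall>c :: nat \<Rightarrow> real.
     (\<forall>j < dim_col A. (\<Sum>k < length S. c k * A $$ (S ! k, j)) = 0) \<longrightarrow> (\<forall>k < length S. c k = 0))"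

definition ordered_subset :: "nat list \<Rightarrow> nat \<Rightarrow> nat \<Rightarrow> bool" where
  "ordered_subset S r n \<longleftrightarrow> distinct S \<and> length S = r \<and> set S \<subseteq> {0..<n}"

definition local_max_det :: "real \<Rightarrow> real mat \<Rightarrow> nat list \<Rightarrow> nat list \<Rightarrow> bool" where
  "local_max_det eps A S T \<longleftrightarrow> det (submat A S T) \<noteq> 0 \<and>
     (\<forall>k < length T. \<forall>j < dim_col A. j \<notin> set T \<longrightarrow>
        \<bar>det (submat A S (T[k := j]))\<bar> \<le> (1 + eps) * \<bar>det (submat A S T)\<bar>)"

(* matrix inverse (only used for nonsingular square matrices) *)
definition mat_inv :: "real mat \<Rightarrow> real mat" where
  "mat_inv M = the (mat_inverse M)"

(* Moore-Penrose pseudoinverse of a full column rank matrix: (B^T B)^{-1} B^T *)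
definition pinv_fcr :: "real mat \<Rightarrow> real mat" where
  "pinv_fcr B = mat_inv (transpose_mat B * B) * transpose_mat B"

definition embed_rows :: "nat \<Rightarrow> nat \<Rightarrow> nat list \<Rightarrow> real mat \<Rightarrow> real mat" where
  "embed_rows n m T P = mat n m (\<lambda>(i,j). if i \<in> set T then P $$ (THE k. k < length T \<and> T ! k = i, j) else 0)"

definition gen_inv :: "real mat \<Rightarrow> real mat \<Rightarrow> bool" where
  "gen_inv A H \<longleftrightarrow> A * H * A = A"

definition reflexive_gen_inv :: "real mat \<Rightarrow> real mat \<Rightarrow> bool" where
  "reflexive_gen_inv A H \<longleftrightarrow> gen_inv A H \<and> H * A * H = H"

definition ah_symmetric :: "real mat \<Rightarrow> real mat \<Rightarrow> bool" where
  "ah_symmetric A H \<longleftrightarrow> transpose_mat (A * H) = A * H"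

definition norm1 :: "real mat \<Rightarrow> real" where
  "norm1 H = (\<Sum>i < dim_row H. \<Sum>j < dim_col H. \<bar>H $$ (i,j)\<bar>)"

end

theory Submission
  imports Defs
begin

lemma rank_ge_inj:
  fixes A M :: "real mat"
  assumes A: "A \<in> carrier_mat m n" and M: "M \<in> carrier_mat m p"
  and sub: "set (cols M) \<subseteq> set (cols A)"
  and inj: "\<And>v. v \<in> carrier_vec p \<Longrightarrow> M *\<^sub>v v = 0\<^sub>v m \<Longrightarrow> v = 0\<^sub>v p"
  shows "p \<le> vec_space.rank m A"
proof -
  interpret V: vec_space "TYPE(real)" m .
  have dist: "distinct (cols M)"
  proof (rule ccontr)
    assume "\<not> ?thesis"
    then obtain i j where "i \<noteq> j" "cols M ! i = cols M ! j" "i < length (cols M)" "j < length (cols M)"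
      using distinct_conv_nth by blast
    then have ij: "i \<noteq> j" "col M i = col M j" "i<p" "j<p" using M by auto
    define v :: "real vec" where "v = unit_vec p i - unit_vec p j"
    have vc: "v \<in> carrier_vec p" unfolding v_def by simp
    have "M *\<^sub>v v = 0\<^sub>v m"
    proof (rule eq_vecI)
      fix k assume "k < dim_vec (0\<^sub>v m :: real vec)"
      then have k: "k < m" by simp
      have "(M *\<^sub>v v) $ k = row M k \<bullet> v" using k M by simp
      also have "\<dots> = M $$ (k,i) - M $$ (k,j)"
        unfolding v_def using k M ij
        by (simp add: scalar_prod_minus_distrib[of _ p] scalar_prod_right_unit)
      also have "\<dots> = 0"
      proof -
        have c: "col M i $ k = col M j $ k" using ij by simp
        have e1: "M $$ (k,i) = col M i $ k" using ij(3) k M by simp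
        have e2: "M $$ (k,j) = col M j $ k" using ij(4) k M by simp
        show ?thesis using c e1 e2 by linarith
      qed
      finally show "(M *\<^sub>v v) $ k = 0\<^sub>v m $ k" using k by simp
    qed (use M in simp)
    from inj[OF vc this] have "v = 0\<^sub>v p" .
    moreover have "v $ i = 1" unfolding v_def using ij by simp
    ultimately show False using ij by simp
  qed
  have "V.lin_indpt (set (cols M))"
  proof
    assume "V.lin_dep (set (cols M))"
    from V.lin_depE[OF M this dist] obtain v where "v \<in> carrier_vec p" "v \<noteq> 0\<^sub>v p" "M *\<^sub>v v = 0\<^sub>v m" .
    with inj show False by blast
  qed
  from V.rank_ge_card_indpt[OF A sub this] distinct_card[OF dist] M show ?thesis by simp
qed

lemma mat_inv_props:
  fixes B :: "real mat" assumes B: "B \<in> carrier_mat k k" and d: "det B \<noteq> 0"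
  shows "mat_inv B \<in> carrier_mat k k \<and> B * mat_inv B = 1\<^sub>m k \<and> mat_inv B * B = 1\<^sub>m k"
proof (cases "mat_inverse B")
  case None
  from mat_inverse(1)[OF B None, of "()"] det_non_zero_imp_unit[OF B d, of "()"] show ?thesis by simp
next
  case (Some X) then show ?thesis using mat_inverse(2)[OF B Some] unfolding mat_inv_def by simp
qed

lemma sum_over_T:
  fixes f :: "nat \<Rightarrow> 'b::comm_monoid_add"
  assumes "distinct T" "set T \<subseteq> {0..<n}" "\<And>l. l < n \<Longrightarrow> l \<notin> set T \<Longrightarrow> f l = 0"
  shows "(\<Sum>l\<in>{0..<n}. f l) = (\<Sum>k\<in>{0..<length T}. f (T!k))"
proof -
  have "(\<Sum>l\<in>{0..<n}. f l) = (\<Sum>l\<in>set T. f l)"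
    by (rule sum.mono_neutral_right) (use assms in auto)
  also have "set T = (!) T ` {0..<length T}" by (auto simp: in_set_conv_nth)
  also have "inj_on ((!) T) {0..<length T}" using assms(1) by (simp add: inj_on_def nth_eq_iff_index_eq)
  then have "(\<Sum>l\<in>(!) T ` {0..<length T}. f l) = (\<Sum>k\<in>{0..<length T}. f (T!k))"
    by (rule sum.reindex_cong) auto
  finally show ?thesis .
qed

lemma the_idx: "distinct T \<Longrightarrow> k < length T \<Longrightarrow> (THE k'. k' < length T \<and> T ! k' = T ! k) = k"
  by (rule the_equality) (auto simp: nth_eq_iff_index_eq)

lemma embed_idx: assumes "distinct T" "k < length T" "T!k < n" "j < m"
  shows "embed_rows n m T P $$ (T!k, j) = P $$ (k,j)"
  unfolding embed_rows_def using assms by (simp add: the_idx)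

lemma embed_idx':
  assumes "distinct T" "set T \<subseteq> {0..<n}" "k < length T" "j < m"
  shows "embed_rows n m T P $$ (T!k, j) = P $$ (k,j)"
proof -
  have "T!k < n" using assms(2,3) nth_mem by fastforce
  then show ?thesis using embed_idx assms by blast
qed

lemma embed_zero: "i < n \<Longrightarrow> j < m \<Longrightarrow> i \<notin> set T \<Longrightarrow> embed_rows n m T P $$ (i,j) = 0"
  unfolding embed_rows_def by simp

lemma embed_dims[simp]: "dim_row (embed_rows n m T P) = n" "dim_col (embed_rows n m T P) = m"
  unfolding embed_rows_def by simp_all

lemma embed_carrier[simp]: "embed_rows n m T P \<in> carrier_mat n m"
  unfolding embed_rows_def by simp

lemma embed_mult_left:
  assumes T: "distinct T" "set T \<subseteq> {0..<n}" and Z: "Z \<in> carrier_mat q n"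
    and P: "P \<in> carrier_mat (length T) m"
  shows "Z * embed_rows n m T P = submat Z [0..<q] T * P"
proof (rule eq_matI)
  fix i j assume "i < dim_row (submat Z [0..<q] T * P)" "j < dim_col (submat Z [0..<q] T * P)"
  then have ij: "i < q" "j < m" using P by (auto simp: submat_def)
  have "(Z * embed_rows n m T P) $$ (i,j) = (\<Sum>l\<in>{0..<n}. Z$$(i,l) * embed_rows n m T P $$ (l,j))"
    using ij Z by (simp add: scalar_prod_def)
  also have "\<dots> = (\<Sum>k\<in>{0..<length T}. Z$$(i,T!k) * embed_rows n m T P $$ (T!k,j))"
    by (rule sum_over_T) (use T ij embed_zero in auto)
  also have "\<dots> = (\<Sum>k\<in>{0..<length T}. Z$$(i,T!k) * P $$ (k,j))"
    by (rule sum.cong) (simp_all add: embed_idx'[OF T _ ij(2)])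
  also have "\<dots> = (submat Z [0..<q] T * P) $$ (i,j)"
    using ij P by (simp add: scalar_prod_def submat_def)
  finally show "(Z * embed_rows n m T P) $$ (i,j) = (submat Z [0..<q] T * P) $$ (i,j)" .
qed (use Z P in \<open>auto simp: submat_def\<close>)

lemma embed_mult_right:
  assumes T: "distinct T" "set T \<subseteq> {0..<n}" and Y: "Y \<in> carrier_mat m p"
    and P: "P \<in> carrier_mat (length T) m"
  shows "embed_rows n m T P * Y = embed_rows n p T (P * Y)"
proof (rule eq_matI)
  fix i j assume "i < dim_row (embed_rows n p T (P * Y))" "j < dim_col (embed_rows n p T (P * Y))"
  then have ij: "i < n" "j < p" by auto
  show "(embed_rows n m T P * Y) $$ (i,j) = embed_rows n p T (P * Y) $$ (i,j)"
  proof (cases "i \<in> set T")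
    case True
    then obtain k where k: "k < length T" "i = T!k" by (auto simp: in_set_conv_nth)
    have "(embed_rows n m T P * Y) $$ (i,j) = (\<Sum>l\<in>{0..<m}. embed_rows n m T P $$ (i,l) * Y $$ (l,j))"
      using ij Y by (simp add: scalar_prod_def)
    also have "\<dots> = (\<Sum>l\<in>{0..<m}. P $$ (k,l) * Y $$ (l,j))"
      by (rule sum.cong) (simp_all add: k embed_idx'[OF T k(1)])
    also have "\<dots> = (P * Y) $$ (k,j)" using P Y k ij by (simp add: scalar_prod_def)
    also have "\<dots> = embed_rows n p T (P * Y) $$ (i,j)" using embed_idx[OF T(1) k(1), of n j p] k ij by simp
    finally show ?thesis .
  next
    case False
    then show ?thesis using ij Y by (simp add: embed_zero scalar_prod_def embed_rows_def)
  qed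
qed (use Y in auto)

lemma norm1_embed:
  assumes T: "distinct T" "set T \<subseteq> {0..<n}"
  shows "norm1 (embed_rows n m T P) = (\<Sum>k\<in>{0..<length T}. \<Sum>j<m. \<bar>P $$ (k,j)\<bar>)"
proof -
  have "norm1 (embed_rows n m T P) = (\<Sum>i\<in>{0..<n}. \<Sum>j<m. \<bar>embed_rows n m T P $$ (i,j)\<bar>)"
    unfolding norm1_def by (simp add: atLeast0LessThan)
  also have "\<dots> = (\<Sum>k\<in>{0..<length T}. \<Sum>j<m. \<bar>embed_rows n m T P $$ (T!k,j)\<bar>)"
    by (rule sum_over_T) (use T embed_zero in auto)
  also have "\<dots> = (\<Sum>k\<in>{0..<length T}. \<Sum>j<m. \<bar>P $$ (k,j)\<bar>)"
    by (rule sum.cong[OF refl], rule sum.cong[OF refl]) (simp add: embed_idx'[OF T])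
  finally show ?thesis .
qed

lemma submat_simps[simp]: "dim_row (submat A S T) = length S" "dim_col (submat A S T) = length T"
  "i < length S \<Longrightarrow> j < length T \<Longrightarrow> submat A S T $$ (i,j) = A $$ (S!i, T!j)"
  unfolding submat_def by simp_all

lemma submat_carrier: "submat A S T \<in> carrier_mat (length S) (length T)"
  unfolding submat_def by simp

lemma key_rep:
  fixes A :: "real mat"
  assumes A: "A \<in> carrier_mat m n" and rank: "vec_space.rank m A = r"
   and lS: "length S = r" and Sm: "set S \<subseteq> {0..<m}" and lT: "length T = r" and Tn: "set T \<subseteq> {0..<n}"
   and Bi: "Bi \<in> carrier_mat r r" "Bi * submat A S T = 1\<^sub>m r" "submat A S T * Bi = 1\<^sub>m r"
  shows "A = submat A [0..<m] T * (Bi * submat A S [0..<n])"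
proof (rule eq_matI)
  let ?Ah = "submat A [0..<m] T" and ?AS = "submat A S [0..<n]" and ?B = "submat A S T"
  let ?C = "Bi * ?AS"
  have AS: "?AS \<in> carrier_mat r n" using lS by (simp add: carrier_matI)
  have B: "?B \<in> carrier_mat r r" using lS lT by (simp add: carrier_matI)
  have C: "?C \<in> carrier_mat r n" using Bi AS by simp
  fix i l assume "i < dim_row (?Ah * ?C)" "l < dim_col (?Ah * ?C)"
  then have il: "i < m" "l < n" using C by auto
  show "A $$ (i,l) = (?Ah * ?C) $$ (i,l)"
  proof (rule ccontr)
    assume ne: "A $$ (i,l) \<noteq> (?Ah * ?C) $$ (i,l)"
    define c where "c = col ?C l"
    have cc: "c \<in> carrier_vec r" using C il unfolding c_def by simp
    have cBi: "c = Bi *\<^sub>v col ?AS l" unfolding c_def using col_mult2[OF Bi(1) AS il(2)] .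
    have Cent: "(?Ah * ?C) $$ (i,l) = (\<Sum>j\<in>{0..<r}. A$$(i,T!j) * c$j)"
    proof -
      have "(?Ah * ?C) $$ (i,l) = row ?Ah i \<bullet> c"
        unfolding c_def by (rule index_mult_mat(1)) (use il C lT in auto)
      also have "\<dots> = (\<Sum>j\<in>{0..<r}. A$$(i,T!j) * c$j)"
        using cc il lT by (simp add: scalar_prod_def)
      finally show ?thesis .
    qed
    define M where "M = submat A [0..<m] (T@[l])"
    have M: "M \<in> carrier_mat m (Suc r)" unfolding M_def using lT by (simp add: carrier_matI)
    have Ment: "\<And>q j. q < m \<Longrightarrow> j < Suc r \<Longrightarrow> M $$ (q,j) = A $$ (q, (T@[l])!j)"
      unfolding M_def using lT by simp
    have sub: "set (cols M) \<subseteq> set (cols A)"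
    proof
      fix x assume "x \<in> set (cols M)"
      then obtain j where j: "j < Suc r" "x = col M j" using M by (auto simp: in_set_conv_nth)
      have jn: "(T@[l])!j < n"
      proof (cases "j < r")
        case True
        then have "T!j \<in> set T" using lT by simp
        then have "T!j < n" using Tn by auto
        then show ?thesis using True lT by (simp add: nth_append)
      next
        case False
        then show ?thesis using j(1) lT il(2) by (simp add: nth_append)
      qed
      have "x = col A ((T@[l])!j)"
        by (rule eq_vecI) (use j M A Ment jn in auto)
      moreover have "col A ((T@[l])!j) \<in> set (cols A)" using jn A
        by (metis carrier_matD(2) cols_length cols_nth nth_mem)
      ultimately show "x \<in> set (cols A)" by simp
    qed
    have inj: "v = 0\<^sub>v (Suc r)" if v: "v \<in> carrier_vec (Suc r)" "M *\<^sub>v v = 0\<^sub>v m" for v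
    proof -
      define t where "t = v $ r"
      define v' :: "real vec" where "v' = vec r (\<lambda>j. v $ j)"
      have row: "(\<Sum>j\<in>{0..<r}. A$$(q,T!j) * v'$j) + A$$(q,l) * t = 0" if q: "q < m" for q
      proof -
        have "0 = (M *\<^sub>v v) $ q" using v q by simp
        also have "\<dots> = (\<Sum>j\<in>{0..<Suc r}. M$$(q,j) * v$j)" using q M v(1) by (simp add: scalar_prod_def)
        also have "\<dots> = (\<Sum>j\<in>{0..<r}. M$$(q,j) * v$j) + M$$(q,r) * v$r" by simp
        also have "\<dots> = (\<Sum>j\<in>{0..<r}. A$$(q,T!j) * v'$j) + A$$(q,l) * t"
          unfolding t_def v'_def using q lT by (auto simp: Ment nth_append intro!: sum.cong)
        finally show ?thesis by simp
      qed
      have Bv: "?B *\<^sub>v v' = (-t) \<cdot>\<^sub>v col ?AS l"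
      proof (rule eq_vecI)
        fix p assume "p < dim_vec ((-t) \<cdot>\<^sub>v col ?AS l)"
        then have p: "p < r" using lS by simp
        have Sp: "S!p < m" using p lS Sm nth_mem by fastforce
        have "(?B *\<^sub>v v') $ p = (\<Sum>j\<in>{0..<r}. A$$(S!p,T!j) * v'$j)"
          using p lS lT by (simp add: scalar_prod_def v'_def)
        also have "\<dots> = - A$$(S!p,l) * t" using row[OF Sp] by simp
        also have "\<dots> = ((-t) \<cdot>\<^sub>v col ?AS l) $ p" using p lS il by simp
        finally show "(?B *\<^sub>v v') $ p = ((-t) \<cdot>\<^sub>v col ?AS l) $ p" .
      qed (use B lS in simp)
      have v'c: "v' \<in> carrier_vec r" unfolding v'_def by simp
      have "v' = Bi *\<^sub>v (?B *\<^sub>v v')"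
        using Bi B v'c by (simp add: assoc_mult_mat_vec[symmetric, OF Bi(1) B v'c])
      also have "\<dots> = (-t) \<cdot>\<^sub>v c" unfolding Bv cBi
        by (rule mult_mat_vec[OF Bi(1)]) (use AS il in simp)
      finally have v'eq: "v' = (-t) \<cdot>\<^sub>v c" .
      have "t * (A$$(i,l) - (?Ah * ?C) $$ (i,l)) = 0"
      proof -
        have "(\<Sum>j\<in>{0..<r}. A$$(i,T!j) * v'$j) = (\<Sum>j\<in>{0..<r}. (-t) * (A$$(i,T!j) * c$j))"
          using v'eq cc by (intro sum.cong) auto
        also have "\<dots> = - t * (?Ah * ?C) $$ (i,l)" unfolding Cent by (simp add: sum_distrib_left)
        finally show ?thesis using row[OF il(1)] by (simp add: algebra_simps)
      qed
      with ne have t0: "t = 0" by simp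
      have "v' = 0\<^sub>v r" using v'eq t0 cc by auto
      show "v = 0\<^sub>v (Suc r)"
      proof (rule eq_vecI)
        fix j assume "j < dim_vec (0\<^sub>v (Suc r) :: real vec)"
        then have j: "j < Suc r" by simp
        show "v $ j = 0\<^sub>v (Suc r) $ j"
        proof (cases "j < r")
          case True
          then have "v' $ j = 0" using \<open>v' = 0\<^sub>v r\<close> by simp
          then show ?thesis using True j unfolding v'_def by simp
        next
          case False
          then have "j = r" using j by simp
          then show ?thesis using t0 j unfolding t_def by simp
        qed
      qed (use v in simp)
    qed
    from rank_ge_inj[OF A M sub inj] rank show False by simp
  qed
qed (use A in \<open>auto simp: carrier_matD\<close>)

lemma proj_unique:
  fixes A H1 H2 :: "real mat"
  assumes A: "A \<in> carrier_mat m n" and H1: "H1 \<in> carrier_mat n m" and H2: "H2 \<in> carrier_mat n m"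
    and g1: "A * H1 * A = A" and g2: "A * H2 * A = A"
    and s1: "transpose_mat (A * H1) = A * H1" and s2: "transpose_mat (A * H2) = A * H2"
  shows "A * H1 = A * H2"
proof -
  have X: "A * H1 \<in> carrier_mat m m" and Y: "A * H2 \<in> carrier_mat m m" using A H1 H2 by auto
  have XY: "(A * H1) * (A * H2) = A * H2"
  proof -
    have "(A * H1) * (A * H2) = ((A * H1) * A) * H2" using assoc_mult_mat[OF X A H2] by simp
    then show ?thesis using g1 by simp
  qed
  have YX: "(A * H2) * (A * H1) = A * H1"
  proof -
    have "(A * H2) * (A * H1) = ((A * H2) * A) * H1" using assoc_mult_mat[OF Y A H1] by simp
    then show ?thesis using g2 by simp
  qed
  have "A * H2 = transpose_mat (A * H2)" using s2 by simp
  also have "\<dots> = transpose_mat ((A * H1) * (A * H2))" using XY by simp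
  also have "\<dots> = transpose_mat (A * H2) * transpose_mat (A * H1)" by (rule transpose_mult[OF X Y])
  also have "\<dots> = A * H1" using s1 s2 YX by simp
  finally show ?thesis by simp
qed

lemma rows_mult:
  fixes A X :: "real mat"
  assumes A: "A \<in> carrier_mat m n" and X: "X \<in> carrier_mat n q" and Sm: "set S \<subseteq> {0..<m}"
  shows "submat A S [0..<n] * X = submat (A * X) S [0..<q]"
proof (rule eq_matI)
  fix i j assume "i < dim_row (submat (A * X) S [0..<q])" "j < dim_col (submat (A * X) S [0..<q])"
  then have ij: "i < length S" "j < q" by auto
  have Si: "S!i < m" using ij Sm nth_mem by fastforce
  show "(submat A S [0..<n] * X) $$ (i,j) = submat (A * X) S [0..<q] $$ (i,j)"
    using ij Si A X by (simp add: scalar_prod_def)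
qed (use X in auto)

lemma G_inv:
  fixes A :: "real mat"
  assumes A: "A \<in> carrier_mat m n" and lS: "length S = r" and Sm: "set S \<subseteq> {0..<m}"
    and lT: "length T = r"
    and Bi: "Bi \<in> carrier_mat r r" "Bi * submat A S T = 1\<^sub>m r"
  shows "det (transpose_mat (submat A [0..<m] T) * submat A [0..<m] T) \<noteq> 0"
proof
  let ?Ah = "submat A [0..<m] T" and ?B = "submat A S T"
  have Ah: "?Ah \<in> carrier_mat m r" using lT by (simp add: carrier_matI)
  have B: "?B \<in> carrier_mat r r" using lS lT by (simp add: carrier_matI)
  have G: "transpose_mat ?Ah * ?Ah \<in> carrier_mat r r" using Ah by simp
  assume "det (transpose_mat ?Ah * ?Ah) = 0"
  then obtain v where v: "v \<in> carrier_vec r" "v \<noteq> 0\<^sub>v r" "(transpose_mat ?Ah * ?Ah) *\<^sub>v v = 0\<^sub>v r"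
    using det_0_iff_vec_prod_zero_field[OF G] by blast
  define w where "w = ?Ah *\<^sub>v v"
  have wc: "w \<in> carrier_vec m" using Ah v unfolding w_def by simp
  have tw: "transpose_mat ?Ah *\<^sub>v w = 0\<^sub>v r" using v Ah unfolding w_def
    by (metis assoc_mult_mat_vec transpose_carrier_mat)
  have "(\<Sum>q\<in>{0..<m}. w$q * w$q) = (\<Sum>q\<in>{0..<m}. w$q * (\<Sum>j\<in>{0..<r}. A$$(q,T!j) * v$j))"
    using wc v lT unfolding w_def by (intro sum.cong) (auto simp: scalar_prod_def)
  also have "\<dots> = (\<Sum>q\<in>{0..<m}. \<Sum>j\<in>{0..<r}. v$j * (A$$(q,T!j) * w$q))"
    by (simp add: sum_distrib_left mult_ac)
  also have "\<dots> = (\<Sum>j\<in>{0..<r}. \<Sum>q\<in>{0..<m}. v$j * (A$$(q,T!j) * w$q))"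
    by (rule sum.swap)
  also have "\<dots> = (\<Sum>j\<in>{0..<r}. v$j * (\<Sum>q\<in>{0..<m}. A$$(q,T!j) * w$q))"
    by (simp add: sum_distrib_left)
  also have "\<dots> = (\<Sum>j\<in>{0..<r}. v$j * (transpose_mat ?Ah *\<^sub>v w) $ j)"
    using wc lT Ah by (intro sum.cong) (auto simp: scalar_prod_def)
  also have "\<dots> = 0" using tw by simp
  finally have "(\<Sum>q\<in>{0..<m}. w$q * w$q) = 0" .
  then have w0: "\<forall>q\<in>{0..<m}. w$q * w$q = 0"
    by (subst sum_nonneg_eq_0_iff[symmetric]) auto
  have "?B *\<^sub>v v = 0\<^sub>v r"
  proof (rule eq_vecI)
    fix p assume "p < dim_vec (0\<^sub>v r :: real vec)"
    then have p: "p < r" by simp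
    have Sp: "S!p < m" using p lS Sm nth_mem by fastforce
    have "(?B *\<^sub>v v) $ p = w $ (S!p)" using p Sp lS lT v unfolding w_def by (simp add: scalar_prod_def)
    also have "\<dots> = 0" using w0 Sp by simp
    finally show "(?B *\<^sub>v v) $ p = 0\<^sub>v r $ p" using p by simp
  qed (use lS in simp)
  moreover have "Bi *\<^sub>v 0\<^sub>v r = 0\<^sub>v r" using Bi by (intro eq_vecI) (auto simp: scalar_prod_def)
  ultimately have "Bi *\<^sub>v (?B *\<^sub>v v) = 0\<^sub>v r" by simp
  moreover have "Bi *\<^sub>v (?B *\<^sub>v v) = v" using Bi B v
    by (metis assoc_mult_mat_vec one_mult_mat_vec)
  ultimately show False using v by simp
qed

lemma C_bound:
  fixes A Bi :: "real mat"
  assumes A: "A \<in> carrier_mat m n" and lS: "length S = r" and lT: "length T = r"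
    and Tn: "set T \<subseteq> {0..<n}"
    and loc: "local_max_det eps A S T" and eps: "eps \<ge> 0"
    and Bi: "Bi \<in> carrier_mat r r" "Bi * submat A S T = 1\<^sub>m r" "submat A S T * Bi = 1\<^sub>m r"
    and i: "i < r" and l: "l < n"
  shows "\<bar>(Bi * submat A S [0..<n]) $$ (i,l)\<bar> \<le> 1 + eps"
proof -
  let ?B = "submat A S T" and ?AS = "submat A S [0..<n]"
  have AS: "?AS \<in> carrier_mat r n" using lS by (simp add: carrier_matI)
  have B: "?B \<in> carrier_mat r r" using lS lT by (simp add: carrier_matI)
  have colc: "col ?AS l \<in> carrier_vec r" using AS l by simp
  define c where "c = Bi *\<^sub>v col ?AS l"
  have cc: "c \<in> carrier_vec r" using Bi colc unfolding c_def by simp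
  have Cil: "(Bi * ?AS) $$ (i,l) = c $ i"
    unfolding c_def using i l Bi AS by simp
  have Bc: "?B *\<^sub>v c = col ?AS l"
    unfolding c_def using assoc_mult_mat_vec[OF B Bi(1) colc, symmetric] Bi(3) colc by simp
  show ?thesis
  proof (cases "l \<in> set T")
    case True
    then obtain k where k: "k < r" "l = T!k" using lT by (auto simp: in_set_conv_nth)
    have "col ?AS l = col ?B k" by (rule eq_vecI) (use k lS lT l in auto)
    then have "c = Bi *\<^sub>v col ?B k" unfolding c_def by simp
    also have "\<dots> = col (Bi * ?B) k" using col_mult2[OF Bi(1) B k(1)] by simp
    also have "\<dots> = unit_vec r k" using Bi(2) k by simp
    finally have "c $ i = (if i = k then 1 else 0)" using i k by simp
    then show ?thesis using Cil eps by simp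
  next
    case False
    have rc: "replace_col ?B (?B *\<^sub>v c) i = submat A S (T[i := l])"
      unfolding Bc by (rule eq_matI) (use i l lS lT in \<open>auto simp: replace_col_def nth_list_update\<close>)
    from cramer_lemma_mat[OF B cc i] rc have d: "det (submat A S (T[i:=l])) = c$i * det ?B" by simp
    from loc False i l A lT have le: "\<bar>det (submat A S (T[i:=l]))\<bar> \<le> (1+eps) * \<bar>det ?B\<bar>"
      and nz: "det ?B \<noteq> 0" unfolding local_max_det_def by auto
    from d le have "\<bar>c$i\<bar> * \<bar>det ?B\<bar> \<le> (1+eps) * \<bar>det ?B\<bar>" by (simp add: abs_mult)
    with nz have "\<bar>c$i\<bar> \<le> 1 + eps" by simp
    then show ?thesis using Cil by simp
  qed
qed

theorem theorem3p7:
  fixes A :: "real mat" and m n r :: nat and S T :: "nat list" and eps :: real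
  assumes A: "A \<in> carrier_mat m n"
    and rank: "vec_space.rank m A = r" and r1: "r \<ge> 1"
    and S: "ordered_subset S r m" and Sind: "rows_lin_indep A S"
    and eps: "eps \<ge> 0"
    and T: "ordered_subset T r n" and loc: "local_max_det eps A S T"
  shows "ah_symmetric A (embed_rows n m T (pinv_fcr (cols_sub A T)))
       \<and> reflexive_gen_inv A (embed_rows n m T (pinv_fcr (cols_sub A T)))
       \<and> (\<forall>Hopt \<in> carrier_mat n m. ah_symmetric A Hopt \<and> reflexive_gen_inv A Hopt
            \<longrightarrow> norm1 (embed_rows n m T (pinv_fcr (cols_sub A T))) \<le> real r * (1 + eps) * norm1 Hopt)"
proof -
  from S have dS: "distinct S" and lS: "length S = r" and Sm: "set S \<subseteq> {0..<m}"
    unfolding ordered_subset_def by auto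
  from T have dT: "distinct T" and lT: "length T = r" and Tn: "set T \<subseteq> {0..<n}"
    unfolding ordered_subset_def by auto
  have Am: "dim_row A = m" "dim_col A = n" using A by auto
  define B where "B = submat A S T"
  have Bc: "B \<in> carrier_mat r r" unfolding B_def using lS lT by (simp add: carrier_matI)
  have dB: "det B \<noteq> 0" using loc unfolding local_max_det_def B_def by simp
  define Bi where "Bi = mat_inv B"
  from mat_inv_props[OF Bc dB] have Bi: "Bi \<in> carrier_mat r r" "B * Bi = 1\<^sub>m r" "Bi * B = 1\<^sub>m r"
    unfolding Bi_def by auto
  define AS where "AS = submat A S [0..<n]"
  define Ah where "Ah = submat A [0..<m] T"
  have Ah_eq: "cols_sub A T = Ah" unfolding cols_sub_def Ah_def using Am by simp
  have ASc: "AS \<in> carrier_mat r n" unfolding AS_def using lS by (simp add: carrier_matI)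
  have Ahc: "Ah \<in> carrier_mat m r" unfolding Ah_def using lT by (simp add: carrier_matI)
  define C where "C = Bi * AS"
  have Cc: "C \<in> carrier_mat r n" unfolding C_def using Bi ASc by simp
  have rep: "A = Ah * C"
    unfolding Ah_def C_def AS_def using key_rep[OF A rank lS Sm lT Tn, of Bi] Bi unfolding B_def by simp
  define G where "G = transpose_mat Ah * Ah"
  have Gc: "G \<in> carrier_mat r r" unfolding G_def using Ahc by simp
  have dG: "det G \<noteq> 0" unfolding G_def Ah_def
    using G_inv[OF A lS Sm lT, of Bi] Bi unfolding B_def by simp
  define Gi where "Gi = mat_inv G"
  from mat_inv_props[OF Gc dG] have Gi: "Gi \<in> carrier_mat r r" "G * Gi = 1\<^sub>m r" "Gi * G = 1\<^sub>m r"
    unfolding Gi_def by auto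
  define P where "P = Gi * transpose_mat Ah"
  have P_eq: "pinv_fcr (cols_sub A T) = P" unfolding P_def Ah_eq pinv_fcr_def Gi_def G_def by simp
  have Pc: "P \<in> carrier_mat r m" unfolding P_def using Gi Ahc by simp
  define H where "H = embed_rows n m T P"
  have Hc: "H \<in> carrier_mat n m" unfolding H_def by simp
  have PAh: "P * Ah = 1\<^sub>m r"
  proof -
    have "P * Ah = Gi * (transpose_mat Ah * Ah)" unfolding P_def
      using Gi(1) Ahc by (simp add: assoc_mult_mat[of _ r r _ m _ r])
    then show ?thesis using Gi(3) unfolding G_def by simp
  qed
  have AH: "A * H = Ah * P" unfolding H_def Ah_def
    using embed_mult_left[OF dT Tn A, of P m] Pc lT by simp
  have GT: "transpose_mat G = G" unfolding G_def using Ahc by (simp add: transpose_mult[of _ r m _ r])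
  have GiT: "transpose_mat Gi = Gi"
  proof -
    have GiTc: "transpose_mat Gi \<in> carrier_mat r r" using Gi by simp
    have "transpose_mat Gi * G = 1\<^sub>m r"
    proof -
      have "transpose_mat Gi * G = transpose_mat Gi * transpose_mat G" using GT by simp
      also have "\<dots> = transpose_mat (G * Gi)" using transpose_mult[OF Gc Gi(1)] by simp
      finally show ?thesis using Gi(2) by simp
    qed
    note tg = this
    have "transpose_mat Gi = transpose_mat Gi * 1\<^sub>m r" using GiTc by simp
    also have "\<dots> = transpose_mat Gi * (G * Gi)" using Gi(2) by simp
    also have "\<dots> = (transpose_mat Gi * G) * Gi" using assoc_mult_mat[OF GiTc Gc Gi(1)] by simp
    also have "\<dots> = Gi" using tg Gi(1) by simp
    finally show ?thesis .
  qed
  have sym: "transpose_mat (A * H) = A * H"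
  proof -
    have "transpose_mat (A * H) = transpose_mat (Ah * (Gi * transpose_mat Ah))" unfolding AH P_def ..
    also have "\<dots> = transpose_mat (Gi * transpose_mat Ah) * transpose_mat Ah"
      using transpose_mult[OF Ahc Pc[unfolded P_def]] .
    also have "\<dots> = (Ah * transpose_mat Gi) * transpose_mat Ah"
      using transpose_mult[OF Gi(1), of "transpose_mat Ah" m] Ahc by simp
    also have "\<dots> = Ah * (Gi * transpose_mat Ah)" using GiT Ahc Gi(1) by simp
    finally show ?thesis unfolding AH P_def .
  qed
  have AHA: "A * H * A = A"
  proof -
    have "A * H * A = (Ah * P) * (Ah * C)" unfolding AH using rep by simp
    also have "\<dots> = Ah * (P * (Ah * C))" by (rule assoc_mult_mat[OF Ahc Pc mult_carrier_mat[OF Ahc Cc]])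
    also have "P * (Ah * C) = (P * Ah) * C" using assoc_mult_mat[OF Pc Ahc Cc] by simp
    also have "\<dots> = C" using PAh Cc by simp
    finally show ?thesis using rep by simp
  qed
  have HAH: "H * A * H = H"
  proof -
    have "H * A * H = H * (A * H)" using Hc A by simp
    also have "\<dots> = embed_rows n m T (P * (Ah * P))" unfolding AH unfolding H_def
      using embed_mult_right[OF dT Tn, of "Ah * P" m m P] Ahc Pc lT by simp
    also have "P * (Ah * P) = (P * Ah) * P" using assoc_mult_mat[OF Pc Ahc Pc] by simp
    also have "\<dots> = P" using PAh Pc by simp
    finally show ?thesis unfolding H_def .
  qed
  have norm: "norm1 H \<le> real r * (1 + eps) * norm1 Hopt"
    if Ho: "Hopt \<in> carrier_mat n m" and ahs: "ah_symmetric A Hopt" and rg: "reflexive_gen_inv A Hopt" for Hopt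
  proof -
    from ahs rg have so: "transpose_mat (A * Hopt) = A * Hopt" and go: "A * Hopt * A = A"
      unfolding ah_symmetric_def reflexive_gen_inv_def gen_inv_def by auto
    have AHo: "A * Hopt = A * H" using proj_unique[OF A Ho Hc go AHA so sym] .
    have ASH: "AS * H = B * P"
    proof -
      have "AS * H = submat AS [0..<r] T * P" unfolding H_def
        using embed_mult_left[OF dT Tn ASc, of P m] Pc lT by simp
      moreover have "submat AS [0..<r] T = B" unfolding AS_def B_def
      proof (rule eq_matI)
        fix i j assume "i < dim_row (submat A S T)" "j < dim_col (submat A S T)"
        then have ij: "i < r" "j < r" using lS lT by auto
        have "T!j < n" using ij lT Tn nth_mem by fastforce
        then show "submat (submat A S [0..<n]) [0..<r] T $$ (i, j) = submat A S T $$ (i, j)"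
          using ij lS lT by simp
      qed (use lS lT in auto)
      ultimately show ?thesis by simp
    qed
    have ASHo: "AS * Hopt = AS * H"
      unfolding AS_def using rows_mult[OF A Ho Sm] rows_mult[OF A Hc Sm] AHo by simp
    have PC: "P = C * Hopt"
    proof -
      have "P = (Bi * B) * P" using Bi Pc by simp
      also have "\<dots> = Bi * (B * P)" using Bi(1) Bc Pc by (rule assoc_mult_mat)
      also have "\<dots> = Bi * (AS * Hopt)" using ASH ASHo by simp
      also have "\<dots> = C * Hopt" unfolding C_def using Bi(1) ASc Ho by simp
      finally show ?thesis .
    qed
    have Cb: "\<bar>C $$ (k,l)\<bar> \<le> 1 + eps" if "k < r" "l < n" for k l
      unfolding C_def AS_def using C_bound[OF A lS lT Tn loc eps, of Bi] Bi that unfolding B_def by simp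
    have Pb: "\<bar>P $$ (k,j)\<bar> \<le> (1 + eps) * (\<Sum>l\<in>{0..<n}. \<bar>Hopt $$ (l,j)\<bar>)" if kj: "k < r" "j < m" for k j
    proof -
      have "P $$ (k,j) = (\<Sum>l\<in>{0..<n}. C $$ (k,l) * Hopt $$ (l,j))"
        unfolding PC using kj Cc Ho by (simp add: scalar_prod_def)
      then have "\<bar>P $$ (k,j)\<bar> \<le> (\<Sum>l\<in>{0..<n}. \<bar>C $$ (k,l)\<bar> * \<bar>Hopt $$ (l,j)\<bar>)"
        by (simp add: sum_abs[THEN order_trans] abs_mult)
      also have "\<dots> \<le> (\<Sum>l\<in>{0..<n}. (1 + eps) * \<bar>Hopt $$ (l,j)\<bar>)"
        by (rule sum_mono) (use Cb kj in \<open>auto intro: mult_right_mono\<close>)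
      finally show ?thesis by (simp add: sum_distrib_left)
    qed
    have "norm1 H = (\<Sum>k\<in>{0..<r}. \<Sum>j<m. \<bar>P $$ (k,j)\<bar>)" unfolding H_def using norm1_embed[OF dT Tn] lT by simp
    also have "\<dots> \<le> (\<Sum>k\<in>{0..<r}. \<Sum>j<m. (1 + eps) * (\<Sum>l\<in>{0..<n}. \<bar>Hopt $$ (l,j)\<bar>))"
      by (intro sum_mono Pb) auto
    also have "\<dots> = real r * ((1 + eps) * (\<Sum>j<m. \<Sum>l\<in>{0..<n}. \<bar>Hopt $$ (l,j)\<bar>))"
      by (simp add: sum_distrib_left)
    also have "(\<Sum>j<m. \<Sum>l\<in>{0..<n}. \<bar>Hopt $$ (l,j)\<bar>) = norm1 Hopt"
      unfolding norm1_def using Ho by (simp add: atLeast0LessThan sum.swap[of _ "{..<m}"])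
    finally show ?thesis by (simp add: mult_ac)
  qed
  show ?thesis unfolding P_eq H_def[symmetric]
  proof (intro conjI ballI impI)
    show "ah_symmetric A H" unfolding ah_symmetric_def by (rule sym)
    show "reflexive_gen_inv A H" unfolding reflexive_gen_inv_def gen_inv_def using AHA HAH by simp
    fix Hopt assume "Hopt \<in> carrier_mat n m" "ah_symmetric A Hopt \<and> reflexive_gen_inv A Hopt"
    then show "norm1 H \<le> real r * (1 + eps) * norm1 Hopt" using norm by blast
  qed
qed

end
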